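(* For $x\in(0,1/4]$ and integer $n\ge1$, let $S_n(x)=\sum_{k=0}^{n-1}\frac{(1-x)^k}{n-k}$. Then $$x\,S_n(x)\le\frac{7\ln(1/x)}{n}.$$ *)

theory Defs
  imports Complex_Main
begin

end

theory Submission
  imports Defs
begin

definition SS :: "real \<Rightarrow> nat \<Rightarrow> real" where
  "SS q n = (\<Sum>k<n. q ^ k / real (n - k))"

lemma SS_Suc: "SS q (Suc n) = q * SS q n + 1 / real (Suc n)"
proof -
  have "SS q (Suc n) = (\<Sum>k<Suc n. q ^ k / real (Suc n - k))" by (simp add: SS_def)
  also have "\<dots> = q ^ 0 / real (Suc n - 0) + (\<Sum>k<n. q ^ Suc k / real (Suc n - Suc k))"
    by (rule sum.lessThan_Suc_shift)
  also have "\<dots> = 1 / real (Suc n) + q * SS q n"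
    by (simp add: SS_def sum_distrib_left)
  finally show ?thesis by simp
qed

lemma SS_nonneg: "0 \<le> q \<Longrightarrow> 0 \<le> SS q n"
  unfolding SS_def by (intro sum_nonneg) auto

lemma SS_le_ln: assumes "0 \<le> q" "q \<le> 1" "n \<ge> 1" shows "SS q n \<le> 1 + ln (real n)"
  using assms(3)
proof (induction n rule: nat_induct_at_least)
  case base
  then show ?case by (simp add: SS_def)
next
  case (Suc n)
  have "1 / real (Suc n) \<le> ln (real (Suc n)) - ln (real n)"
  proof -
    have "ln (real n / real (Suc n)) \<le> real n / real (Suc n) - 1"
      using Suc by (intro ln_le_minus_one) auto
    moreover have "ln (real n / real (Suc n)) = ln (real n) - ln (real (Suc n))"
      by (rule ln_divide_pos) (use Suc in auto)
    moreover have "real n / real (Suc n) - 1 = - (1 / real (Suc n))"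
      by (simp add: field_simps)
    ultimately show ?thesis by linarith
  qed
  moreover have "q * SS q n \<le> SS q n"
    using SS_nonneg[OF assms(1), of n] assms(1,2) by (simp add: mult_left_le_one_le)
  ultimately show ?case using Suc SS_Suc[of q n] by linarith
qed

lemma ln2_ge: "ln (2::real) \<ge> 1/2"
proof -
  have "ln (1/2::real) \<le> 1/2 - 1" by (intro ln_le_minus_one) auto
  moreover have "ln (1/2::real) = - ln 2" by (simp add: ln_div)
  ultimately show ?thesis by linarith
qed

theorem lemma3:
  fixes x :: real and n :: nat
  assumes "0 < x" and "x \<le> 1/4" and "n \<ge> 1"
  shows "x * (\<Sum>k<n. (1 - x) ^ k / real (n - k)) \<le> 7 * ln (1 / x) / real n"
proof -
  define L where "L = ln (1 / x)"
  have L4: "L \<ge> ln 4" unfolding L_def using assms by (intro ln_mono) (auto simp: field_simps)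
  have "ln (4::real) = 2 * ln 2" using ln_realpow[of 2 2] by simp
  hence LL: "L \<ge> 1" using L4 ln2_ge by linarith
  have Lx: "L = - ln x" unfolding L_def using assms by (simp add: ln_div)
  have small: "x * SS (1 - x) m \<le> 7 * L / real m" if "m \<ge> 1" "real m * x \<le> 2" for m
  proof -
    have "SS (1 - x) m \<le> 1 + ln (real m)" using assms that by (intro SS_le_ln) auto
    have lnm: "ln (real m) = ln (real m * x) + L"
      using that assms by (simp add: Lx ln_mult)
    have "ln (real m * x) \<le> ln 2" using that assms by (intro ln_mono) auto
    hence lnm2: "ln (real m) \<le> ln 2 + L" using lnm by linarith
    have lnm0: "ln (real m) \<ge> 0" using that by simp
    have "real m * (x * SS (1 - x) m) \<le> real m * x * (1 + ln (real m))"
      using \<open>SS (1 - x) m \<le> 1 + ln (real m)\<close> assms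
      by (simp add: mult_left_mono mult.assoc)
    also have "\<dots> \<le> 2 * (1 + ln (real m))"
      using that lnm0 by (intro mult_right_mono) auto
    also have "\<dots> \<le> 7 * L" using lnm2 LL ln2_ge L4 \<open>ln (4::real) = 2 * ln 2\<close> by (simp add: algebra_simps)
    finally show ?thesis using that by (simp add: field_simps)
  qed
  have main: "x * SS (1 - x) n \<le> 7 * L / real n"
    using assms(3)
  proof (induction n rule: nat_induct_at_least)
    case base
    then show ?case using small[of 1] assms by simp
  next
    case (Suc n)
    show ?case
    proof (cases "real (Suc n) * x \<le> 2")
      case True
      then show ?thesis using small[of "Suc n"] by simp
    next
      case False
      hence nx: "real n * x \<ge> 2 - x" by (simp add: algebra_simps)
      have n0: "real n > 0" using Suc by simp
      have "x * SS (1 - x) (Suc n) = (1 - x) * (x * SS (1 - x) n) + x / real (Suc n)"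
        by (simp add: SS_Suc algebra_simps)
      also have "\<dots> \<le> (1 - x) * (7 * L / real n) + x / real (Suc n)"
        using Suc.IH assms by (intro add_right_mono mult_left_mono) auto
      also have "\<dots> \<le> 7 * L / real (Suc n)"
      proof -
        have key: "7 * L + x * real n \<le> 7 * L * x * (real n + 1)"
        proof -
          have "real n * x * (7 * L - 1) \<ge> (2 - x) * (7 * L - 1)"
            using nx LL by (intro mult_right_mono) auto
          thus ?thesis using LL assms by (simp add: algebra_simps)
        qed
        have "((1 - x) * (7 * L / real n) + x / real (Suc n)) * (real n * (real n + 1))
              = 7 * L * (1 - x) * (real n + 1) + x * real n"
        proof -
          have a: "(1 - x) * (7 * L / real n) * (real n * (real n + 1)) = 7 * L * (1 - x) * (real n + 1)"
            using n0 by (simp add: field_simps)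
          have b: "x / real (Suc n) * (real n * (real n + 1)) = x * real n"
            using n0 by (simp add: field_simps)
          show ?thesis using a b by (simp add: distrib_right)
        qed
        also have "\<dots> \<le> 7 * L * real n" using key by (simp add: algebra_simps)
        also have "\<dots> = (7 * L / real (Suc n)) * (real n * (real n + 1))"
          by (simp add: field_simps)
        finally have "((1 - x) * (7 * L / real n) + x / real (Suc n)) * (real n * (real n + 1))
            \<le> (7 * L / real (Suc n)) * (real n * (real n + 1))" .
        then show ?thesis
          by (rule mult_right_le_imp_le) (use n0 in simp)
      qed
      finally show ?thesis .
    qed
  qed
  thus ?thesis by (simp add: SS_def L_def)
qed

end
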